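(* Let $M$ be a matroid, let $S,T$ be disjoint subsets of $E(M)$, let $k:=\kappa_M(S,T)$, and let $U$ be a set with $S\subseteq U\subseteq E(M)-T$ and $\lambda_M(U)=k$. If $e\in E(M)-(T\cup U)$ satisfies $\kappa_{M/e}(S,T)\neq\kappa_M(S,T)$, then $\kappa_{M/e}(U,T)\neq\kappa_M(U,T)$.
   Context: For a matroid $M$ with ground set $E$, $\lambda_M(X):=r_M(X)+r_M(E-X)-r(M)$, and for disjoint $S,T\subseteq E$, $\kappa_M(S,T):=\min\{\lambda_M(X):S\subseteq X\subseteq E-T\}$. *)

theory Defs
  imports Main
begin

definition matroid :: "'a set \<Rightarrow> 'a set set \<Rightarrow> bool" where
  "matroid E Ind \<longleftrightarrow> finite E \<and> (\<forall>I\<in>Ind. I \<subseteq> E) \<and> {} \<in> Ind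
     \<and> (\<forall>I J. J \<in> Ind \<longrightarrow> I \<subseteq> J \<longrightarrow> I \<in> Ind)
     \<and> (\<forall>I J. I \<in> Ind \<longrightarrow> J \<in> Ind \<longrightarrow> card I < card J \<longrightarrow>
           (\<exists>x\<in>J - I. insert x I \<in> Ind))"

definition mrank :: "'a set set \<Rightarrow> 'a set \<Rightarrow> nat" where
  "mrank Ind X = Max (card ` {I. I \<in> Ind \<and> I \<subseteq> X})"

definition mlambda :: "'a set \<Rightarrow> 'a set set \<Rightarrow> 'a set \<Rightarrow> int" where
  "mlambda E Ind X = int (mrank Ind X) + int (mrank Ind (E - X)) - int (mrank Ind E)"

definition mkappa :: "'a set \<Rightarrow> 'a set set \<Rightarrow> 'a set \<Rightarrow> 'a set \<Rightarrow> int" where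
  "mkappa E Ind S T = Min {mlambda E Ind X | X. S \<subseteq> X \<and> X \<subseteq> E - T}"

definition contract_ground :: "'a set \<Rightarrow> 'a \<Rightarrow> 'a set" where
  "contract_ground E e = E - {e}"

definition contract_indep :: "'a set set \<Rightarrow> 'a \<Rightarrow> 'a set set" where
  "contract_indep Ind e = {I. e \<notin> I \<and>
      (if {e} \<in> Ind then insert e I \<in> Ind else I \<in> Ind)}"

end

theory Submission
  imports Defs
begin

lemma mat_subE: "matroid E Ind \<Longrightarrow> I \<in> Ind \<Longrightarrow> I \<subseteq> E"
  unfolding matroid_def by blast
lemma mat_empty: "matroid E Ind \<Longrightarrow> {} \<in> Ind"
  unfolding matroid_def by blast
lemma mat_down: "matroid E Ind \<Longrightarrow> J \<in> Ind \<Longrightarrow> I \<subseteq> J \<Longrightarrow> I \<in> Ind"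
  unfolding matroid_def by blast
lemma mat_fin: "matroid E Ind \<Longrightarrow> finite E"
  unfolding matroid_def by blast

lemma indep_fin:
  assumes "matroid E Ind" shows "finite {I. I \<in> Ind \<and> I \<subseteq> X}"
proof -
  have "{I. I \<in> Ind \<and> I \<subseteq> X} \<subseteq> Pow E" using assms unfolding matroid_def by auto
  moreover have "finite E" using assms unfolding matroid_def by auto
  ultimately show ?thesis by (meson finite_Pow_iff finite_subset)
qed

lemma indep_finite:
  assumes "matroid E Ind" "I \<in> Ind" shows "finite I"
  using assms unfolding matroid_def by (meson finite_subset)

lemma rank_ge:
  assumes "matroid E Ind" "I \<in> Ind" "I \<subseteq> X" shows "card I \<le> mrank Ind X"
  unfolding mrank_def using assms indep_fin[OF assms(1), of X]
  by (intro Max_ge) auto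

lemma rank_obtain:
  assumes "matroid E Ind" shows "\<exists>I. I \<in> Ind \<and> I \<subseteq> X \<and> card I = mrank Ind X"
proof -
  have ne: "{} \<in> Ind" using assms unfolding matroid_def by auto
  have "mrank Ind X \<in> card ` {I. I \<in> Ind \<and> I \<subseteq> X}"
    unfolding mrank_def using indep_fin[OF assms, of X] ne by (intro Max_in) auto
  then show ?thesis by auto
qed

lemma extend:
  assumes m: "matroid E Ind"
  shows "J \<in> Ind \<Longrightarrow> J \<subseteq> X \<Longrightarrow> \<exists>B. J \<subseteq> B \<and> B \<in> Ind \<and> B \<subseteq> X \<and> card B = mrank Ind X"
proof (induction "mrank Ind X - card J" arbitrary: J rule: less_induct)
  case less
  show ?case
  proof (cases "card J < mrank Ind X")
    case False
    then show ?thesis using rank_ge[OF m less(2,3)] less by (intro exI[of _ J]) auto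
  next
    case True
    obtain I where I: "I \<in> Ind" "I \<subseteq> X" "card I = mrank Ind X" using rank_obtain[OF m] by blast
    then obtain x where x: "x \<in> I - J" "insert x J \<in> Ind"
      using m True less(2) unfolding matroid_def by metis
    have fJ: "finite J" using indep_finite[OF m less(2)] .
    have c: "card (insert x J) = Suc (card J)" using x fJ by simp
    have "mrank Ind X - card (insert x J) < mrank Ind X - card J" using c True by simp
    from less(1)[OF this x(2)] x I less(3)
    obtain B where "insert x J \<subseteq> B \<and> B \<in> Ind \<and> B \<subseteq> X \<and> card B = mrank Ind X" by auto
    then show ?thesis by blast
  qed
qed

lemma rank_mono:
  assumes m: "matroid E Ind" "X \<subseteq> Y" shows "mrank Ind X \<le> mrank Ind Y"
proof -
  obtain I where "I \<in> Ind" "I \<subseteq> X" "card I = mrank Ind X" using rank_obtain[OF m(1)] by blast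
  then show ?thesis using rank_ge[OF m(1), of I Y] assms by auto
qed

lemma rank_submod:
  assumes m: "matroid E Ind"
  shows "mrank Ind (X \<union> Y) + mrank Ind (X \<inter> Y) \<le> mrank Ind X + mrank Ind Y"
proof -
  obtain B0 where B0: "B0 \<in> Ind" "B0 \<subseteq> X \<inter> Y" "card B0 = mrank Ind (X \<inter> Y)"
    using rank_obtain[OF m] by blast
  obtain B where B: "B0 \<subseteq> B" "B \<in> Ind" "B \<subseteq> X \<union> Y" "card B = mrank Ind (X \<union> Y)"
    using extend[OF m B0(1), of "X \<union> Y"] B0 by blast
  have fB: "finite B" using indep_finite[OF m B(2)] .
  have iX: "B \<inter> X \<in> Ind" and iY: "B \<inter> Y \<in> Ind"
    using mat_down[OF m B(2)] by blast+
  have cX: "card (B \<inter> X) \<le> mrank Ind X" using rank_ge[OF m iX] by auto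
  have cY: "card (B \<inter> Y) \<le> mrank Ind Y" using rank_ge[OF m iY] by auto
  have eq: "card (B \<inter> X) + card (B \<inter> Y) = card ((B \<inter> X) \<union> (B \<inter> Y)) + card ((B \<inter> X) \<inter> (B \<inter> Y))"
    using fB by (intro card_Un_Int) auto
  have u: "(B \<inter> X) \<union> (B \<inter> Y) = B" using B(3) by auto
  have "card B0 \<le> card ((B \<inter> X) \<inter> (B \<inter> Y))"
    using B0(2) B(1) fB by (intro card_mono) auto
  moreover have "card (B \<inter> X) + card (B \<inter> Y) = card B + card ((B \<inter> X) \<inter> (B \<inter> Y))"
    using eq u by simp
  ultimately show ?thesis using cX cY B0(3) B(4) by linarith
qed

lemma contract_rank:
  assumes m: "matroid E Ind" and e: "e \<notin> X"
  shows "int (mrank (contract_indep Ind e) X) = int (mrank Ind (insert e X)) - int (mrank Ind {e})"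
proof (cases "{e} \<in> Ind")
  case True
  have CI: "contract_indep Ind e = {I. e \<notin> I \<and> insert e I \<in> Ind}"
    unfolding contract_indep_def using True by simp
  have re: "mrank Ind {e} = 1"
  proof -
    have "1 \<le> mrank Ind {e}" using rank_ge[OF m True, of "{e}"] by simp
    moreover obtain I where "I \<in> Ind" "I \<subseteq> {e}" "card I = mrank Ind {e}"
      using rank_obtain[OF m] by blast
    moreover have "card I \<le> 1" if "I \<subseteq> {e}" for I
      using card_mono[OF _ that] by simp
    ultimately show ?thesis by (metis le_antisym)
  qed
  have fin': "finite {I. I \<in> contract_indep Ind e \<and> I \<subseteq> X}"
  proof -
    have "{I. I \<in> contract_indep Ind e \<and> I \<subseteq> X} \<subseteq> Pow E"
      unfolding CI using mat_subE[OF m] by blast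
    then show ?thesis using mat_fin[OF m] by (meson finite_Pow_iff finite_subset)
  qed
  have ne': "{} \<in> contract_indep Ind e" unfolding CI using True by simp
  obtain I' where I': "I' \<in> contract_indep Ind e" "I' \<subseteq> X" "card I' = mrank (contract_indep Ind e) X"
  proof -
    have "mrank (contract_indep Ind e) X \<in> card ` {I. I \<in> contract_indep Ind e \<and> I \<subseteq> X}"
      unfolding mrank_def using fin' ne' by (intro Max_in) auto
    then show ?thesis using that by auto
  qed
  have le1: "mrank (contract_indep Ind e) X + 1 \<le> mrank Ind (insert e X)"
  proof -
    have i: "insert e I' \<in> Ind" "e \<notin> I'" using I'(1) unfolding CI by auto
    have "finite I'" using indep_finite[OF m i(1)] by simp
    then have "card (insert e I') = card I' + 1" using i by simp
    then show ?thesis using rank_ge[OF m i(1), of "insert e X"] I' by auto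
  qed
  obtain B where B: "{e} \<subseteq> B" "B \<in> Ind" "B \<subseteq> insert e X" "card B = mrank Ind (insert e X)"
    using extend[OF m True, of "insert e X"] by auto
  have "B - {e} \<in> contract_indep Ind e" unfolding CI using B by (simp add: insert_absorb)
  moreover have "B - {e} \<subseteq> X" using B by auto
  ultimately have "card (B - {e}) \<le> mrank (contract_indep Ind e) X"
    unfolding mrank_def using fin' by (intro Max_ge) auto
  moreover have "card (B - {e}) = card B - 1" using B by simp
  moreover have "card B \<ge> 1" using B indep_finite[OF m B(2)] card_mono[of B "{e}"] by simp
  ultimately show ?thesis using le1 re B(4) by linarith
next
  case False
  have CI: "contract_indep Ind e = {I. e \<notin> I \<and> I \<in> Ind}"
    unfolding contract_indep_def using False by simp
  have down: "e \<notin> I" if "I \<in> Ind" for I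
  proof
    assume "e \<in> I"
    then have "{e} \<subseteq> I" by auto
    then show False using mat_down[OF m that] False by blast
  qed
  have s1: "{I. I \<in> contract_indep Ind e \<and> I \<subseteq> X} = {I. I \<in> Ind \<and> I \<subseteq> X}"
    unfolding CI using e by auto
  have s2: "{I. I \<in> Ind \<and> I \<subseteq> insert e X} = {I. I \<in> Ind \<and> I \<subseteq> X}"
    using down by blast
  have s3: "{I. I \<in> Ind \<and> I \<subseteq> {e}} = {{}}"
    using down mat_empty[OF m] by blast
  show ?thesis unfolding mrank_def s1 s2 s3 by simp
qed

lemma kappa_le:
  assumes "finite E" "S \<subseteq> X" "X \<subseteq> E - T"
  shows "mkappa E I S T \<le> mlambda E I X"
proof -
  have "{mlambda E I X | X. S \<subseteq> X \<and> X \<subseteq> E - T} \<subseteq> (mlambda E I) ` Pow E" by auto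
  then have "finite {mlambda E I X | X. S \<subseteq> X \<and> X \<subseteq> E - T}"
    using assms(1) finite_subset by blast
  then show ?thesis unfolding mkappa_def using assms by (intro Min_le) auto
qed

lemma kappa_in:
  assumes "finite E" "S \<subseteq> E - T"
  shows "\<exists>X. S \<subseteq> X \<and> X \<subseteq> E - T \<and> mkappa E I S T = mlambda E I X"
proof -
  have "{mlambda E I X | X. S \<subseteq> X \<and> X \<subseteq> E - T} \<subseteq> (mlambda E I) ` Pow E" by auto
  then have "finite {mlambda E I X | X. S \<subseteq> X \<and> X \<subseteq> E - T}"
    using assms(1) finite_subset by blast
  then have "mkappa E I S T \<in> {mlambda E I X | X. S \<subseteq> X \<and> X \<subseteq> E - T}"
    unfolding mkappa_def using assms by (intro Min_in) auto
  then show ?thesis by auto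
qed

lemma contract_lambda:
  assumes m: "matroid E Ind" and e: "e \<in> E" and X: "X \<subseteq> E - {e}"
  shows "mlambda (contract_ground E e) (contract_indep Ind e) X =
     int (mrank Ind (insert e X)) + int (mrank Ind (E - X)) - int (mrank Ind E) - int (mrank Ind {e})"
proof -
  have a: "insert e (E - {e} - X) = E - X" using e X by auto
  have b: "insert e (E - {e}) = E" using e by auto
  show ?thesis unfolding mlambda_def contract_ground_def
    using contract_rank[OF m, of e X] contract_rank[OF m, of e "E - {e} - X"]
      contract_rank[OF m, of e "E - {e}"] X a b by auto
qed

theorem lemma3p6:
  fixes E :: "'a set" and Ind :: "'a set set" and S T U :: "'a set" and e :: 'a
  assumes "matroid E Ind"
    and "S \<subseteq> E" and "T \<subseteq> E" and "S \<inter> T = {}"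
    and "S \<subseteq> U" and "U \<subseteq> E - T"
    and "mlambda E Ind U = mkappa E Ind S T"
    and "e \<in> E - (T \<union> U)"
    and "mkappa (contract_ground E e) (contract_indep Ind e) S T \<noteq> mkappa E Ind S T"
  shows "mkappa (contract_ground E e) (contract_indep Ind e) U T \<noteq> mkappa E Ind U T"
proof -
  note m = assms(1)
  have fE: "finite E" using m unfolding matroid_def by auto
  have eE: "e \<in> E" "e \<notin> T" "e \<notin> U" using assms(8) by auto
  define r where "r = (\<lambda>X. int (mrank Ind X))"
  define E' where "E' = contract_ground E e"
  define Ind' where "Ind' = contract_indep Ind e"
  have fE': "finite E'" using fE unfolding E'_def contract_ground_def by auto
  have lam: "mlambda E Ind X = r X + r (E - X) - r E" for X
    unfolding mlambda_def r_def by simp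
  have lam': "mlambda E' Ind' X = r (insert e X) + r (E - X) - r E - r {e}" if "X \<subseteq> E - {e}" for X
    unfolding E'_def Ind'_def r_def using contract_lambda[OF m eE(1) that] by simp
  have sub: "r (X \<union> Y) + r (X \<inter> Y) \<le> r X + r Y" for X Y
    unfolding r_def using rank_submod[OF m, of X Y] by linarith
  have r0: "r {} \<ge> 0" unfolding r_def by simp
  define k where "k = mkappa E Ind S T"
  have kU: "mkappa E Ind U T = k"
  proof -
    have "mkappa E Ind U T \<le> mlambda E Ind U" using assms(6) by (intro kappa_le[OF fE]) auto
    moreover obtain X where X: "U \<subseteq> X" "X \<subseteq> E - T" "mkappa E Ind U T = mlambda E Ind X"
      using kappa_in[OF fE, of U T Ind] assms by auto
    moreover have "k \<le> mlambda E Ind X" unfolding k_def using kappa_le[OF fE, of S X T Ind] X assms by auto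
    ultimately show ?thesis using assms(7) k_def by auto
  qed
  have US: "U \<subseteq> E - {e}" using assms eE by auto
  have le1: "mkappa E' Ind' S T \<le> mlambda E' Ind' U"
  proof (rule kappa_le[OF fE'])
    show "S \<subseteq> U" by fact
    show "U \<subseteq> E' - T" using assms(6) eE unfolding E'_def contract_ground_def by blast
  qed
  have "r (U \<union> {e}) + r (U \<inter> {e}) \<le> r U + r {e}" using sub .
  moreover have "U \<inter> {e} = {}" "U \<union> {e} = insert e U" using eE by auto
  ultimately have "mlambda E' Ind' U \<le> mlambda E Ind U" using lam'[OF US] lam[of U] r0 by auto
  then have kl: "mkappa E' Ind' S T < k"
    using le1 assms(7,9) k_def unfolding E'_def Ind'_def by auto
  have SE': "S \<subseteq> E' - T" using assms(4,5,6) eE unfolding E'_def contract_ground_def by blast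
  obtain X0 where X0: "S \<subseteq> X0" "X0 \<subseteq> E' - T" "mkappa E' Ind' S T = mlambda E' Ind' X0"
    using kappa_in[OF fE' SE', of Ind'] by blast
  have X0E: "X0 \<subseteq> E - {e}" using X0(2) unfolding E'_def contract_ground_def by blast
  have X0T: "X0 \<subseteq> E - T" using X0(2) unfolding E'_def contract_ground_def by blast
  have l0: "mlambda E Ind X0 \<ge> k" unfolding k_def using kappa_le[OF fE X0(1) X0T, of Ind] .
  have X0UT: "X0 \<inter> U \<subseteq> E - T" using X0T by blast
  have l1: "mlambda E Ind (X0 \<inter> U) \<ge> k" unfolding k_def
    using kappa_le[OF fE _ X0UT, of S Ind] X0(1) assms(5) by blast
  define Y where "Y = X0 \<union> U"
  have YE: "Y \<subseteq> E - {e}" using X0E US Y_def by auto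
  have s1: "r (X0 \<union> U) + r (X0 \<inter> U) \<le> r X0 + r U" using sub .
  have s2: "r ((E - X0) \<union> (E - U)) + r ((E - X0) \<inter> (E - U)) \<le> r (E - X0) + r (E - U)" using sub .
  have e2: "(E - X0) \<union> (E - U) = E - (X0 \<inter> U)" "(E - X0) \<inter> (E - U) = E - Y" using Y_def by auto
  have s5: "r (Y \<union> insert e X0) + r (Y \<inter> insert e X0) \<le> r Y + r (insert e X0)" using sub .
  have e5: "Y \<union> insert e X0 = insert e Y" "Y \<inter> insert e X0 = X0" using Y_def eE by auto
  have a1: "mlambda E' Ind' X0 \<le> k - 1" using kl X0(3) by simp
  have a2: "mlambda E Ind U = k" using assms(7) k_def by simp
  have lY: "mlambda E' Ind' Y \<le> k - 1"
  proof -
    have s1': "r Y + r (X0 \<inter> U) \<le> r X0 + r U" using s1 Y_def by simp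
    have s2': "r (E - (X0 \<inter> U)) + r (E - Y) \<le> r (E - X0) + r (E - U)" using s2 e2 by simp
    have s5': "r (insert e Y) + r X0 \<le> r Y + r (insert e X0)" using s5 e5 by simp
    note q = lam'[OF YE] lam'[OF X0E] lam[of X0] lam[of "X0 \<inter> U"] lam[of U] lam[of Y]
    show ?thesis using s1' s2' s5' q a1 a2 l0 l1 by linarith
  qed
  have "mkappa E' Ind' U T \<le> mlambda E' Ind' Y"
  proof (rule kappa_le[OF fE'])
    show "U \<subseteq> Y" using Y_def by blast
    show "Y \<subseteq> E' - T" using Y_def X0(2) assms(6) eE unfolding E'_def contract_ground_def by blast
  qed
  then show ?thesis using lY kU unfolding E'_def Ind'_def by auto
qed

end
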